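(* Let $G$ be a group, let $A,B\subseteq G$ be nonempty finite sets, $N>0$ a real number and $\epsilon\in(0,1)$. (a) If $d=\operatorname{VC}^\ell_B(A)$ and $\epsilon\leq N/|BA|$, then $\operatorname{cov}(B:\operatorname{Stab}^\ell_N(A)\cap B^{-1}B)\leq(30/\epsilon)^d$. (b) If $d=\operatorname{VC}^r_B(A)$ and $\epsilon\leq N/|AB|$, then $\operatorname{cov}(B^{-1}:\operatorname{Stab}^r_N(A)\cap BB^{-1})\leq(30/\epsilon)^d$.
   Context: $AB=\{ab\}$, $A^{-1}=\{a^{-1}\}$. A set system $\mathcal F$ on $X$ shatters $Y\subseteq X$ if $\{Y\cap S:S\in\mathcal F\}$ is the power set of $Y$; $\operatorname{VC}(\mathcal F)$ is the maximum size of a finite shattered set. $\operatorname{VC}^\ell_B(A)=\operatorname{VC}(\{xA:x\in B\})$, $\operatorname{VC}^r_B(A)=\operatorname{VC}(\{Ax:x\in B\})$. $\operatorname{Stab}^\ell_N(A)=\{x\in G:|xA\triangle A|\le N\}$, $\operatorname{Stab}^r_N(A)=\{x\in G:|Ax\triangle A|\le N\}$. For nonempty $Y,C\subseteq G$ and real $K\ge1$, $\operatorname{cov}(Y:C)\leq K$ means $Y\subseteq FC$ for some $F\subseteq Y$ with $|F|\leq K$. *)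

theory Defs
  imports "HOL-Algebra.Algebra"
begin

definition shatters :: "'a set set \<Rightarrow> 'a set \<Rightarrow> bool" where
  "shatters F Y \<longleftrightarrow> (\<lambda>S. Y \<inter> S) ` F = Pow Y"

definition VC :: "'a set \<Rightarrow> 'a set set \<Rightarrow> nat" where
  "VC U S = Max (card ` {Y. Y \<subseteq> U \<and> finite Y \<and> shatters S Y})"

definition VC_left :: "('a, 'b) monoid_scheme \<Rightarrow> 'a set \<Rightarrow> 'a set \<Rightarrow> nat" where
  "VC_left G B A = VC (carrier G) (image (\<lambda>x. l_coset G x A) B)"

definition VC_right :: "('a, 'b) monoid_scheme \<Rightarrow> 'a set \<Rightarrow> 'a set \<Rightarrow> nat" where
  "VC_right G B A = VC (carrier G) (image (\<lambda>x. r_coset G A x) B)"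

definition Stab_left :: "('a, 'b) monoid_scheme \<Rightarrow> real \<Rightarrow> 'a set \<Rightarrow> 'a set" where
  "Stab_left G N A = {x \<in> carrier G. real (card ((x <#\<^bsub>G\<^esub> A) - A \<union> (A - (x <#\<^bsub>G\<^esub> A)))) \<le> N}"

definition Stab_right :: "('a, 'b) monoid_scheme \<Rightarrow> real \<Rightarrow> 'a set \<Rightarrow> 'a set" where
  "Stab_right G N A = {x \<in> carrier G. real (card ((A #>\<^bsub>G\<^esub> x) - A \<union> (A - (A #>\<^bsub>G\<^esub> x)))) \<le> N}"

definition cov_le :: "('a, 'b) monoid_scheme \<Rightarrow> 'a set \<Rightarrow> 'a set \<Rightarrow> real \<Rightarrow> bool" where
  "cov_le G Y C K \<longleftrightarrow> (\<exists>F. F \<subseteq> Y \<and> finite F \<and> real (card F) \<le> K \<and> Y \<subseteq> F <#>\<^bsub>G\<^esub> C)"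

end

theory Submission
  imports Defs
begin


definition sdiff :: "'a set \<Rightarrow> 'a set \<Rightarrow> 'a set" where "sdiff P Q = (P - Q) \<union> (Q - P)"
definition proj :: "'a set set \<Rightarrow> 'a set \<Rightarrow> 'a set set" where "proj F S = (\<lambda>P. P \<inter> S) ` F"
definition edges :: "'a set set \<Rightarrow> 'a set \<Rightarrow> ('a set \<times> 'a) set" where
  "edges F S = {(P,y). P \<in> F \<and> y \<in> S \<and> y \<notin> P \<and> insert y P \<in> F}"
definition vcb :: "'a set set \<Rightarrow> 'a set \<Rightarrow> nat \<Rightarrow> bool" where
  "vcb F S d \<longleftrightarrow> (\<forall>Y \<subseteq> S. shatters F Y \<longrightarrow> card Y \<le> d)"
definition Phi :: "nat \<Rightarrow> nat \<Rightarrow> nat" where "Phi d m = (\<Sum>i\<le>d. m choose i)"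

lemma shatters_mono:
  assumes "shatters F Y" "F \<subseteq> F'" shows "shatters F' Y"
proof -
  have "(\<lambda>S. Y \<inter> S) ` F \<subseteq> (\<lambda>S. Y \<inter> S) ` F'" using assms(2) by (rule image_mono)
  moreover have "(\<lambda>S. Y \<inter> S) ` F' \<subseteq> Pow Y" by blast
  ultimately show ?thesis using assms(1) unfolding shatters_def by (rule_tac equalityI) auto
qed

lemma edges_finite: "finite F \<Longrightarrow> finite S \<Longrightarrow> finite (edges F S)"
  by (rule finite_subset[of _ "F \<times> S"]) (auto simp: edges_def)

lemma Phi_Suc: "Phi (Suc e) (Suc m) = Phi (Suc e) m + Phi e m"
  unfolding Phi_def
  by (induction e) simp_all

lemma Phi_0 [simp]: "Phi 0 m = 1" "Phi d 0 = 1"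
  unfolding Phi_def by (simp, induction d, simp_all)

context
  fixes F :: "'a set set" and S :: "'a set" and x :: 'a
  assumes xS: "x \<notin> S" and FS: "F \<subseteq> Pow (insert x S)" and fin: "finite S"
begin

definition "F1 = (\<lambda>P. P - {x}) ` F"
definition "F2 = {Q. Q \<subseteq> S \<and> Q \<in> F \<and> insert x Q \<in> F}"

lemma finF: "finite F"
  using fin FS by (meson finite_Pow_iff finite_insert finite_subset)

lemma F12_sub: "F1 \<subseteq> Pow S" "F2 \<subseteq> Pow S"
  using FS by (auto simp: F1_def F2_def)

lemma card_F12: "card F = card F1 + card F2"
proof -
  define G0 where "G0 = {P\<in>F. x \<notin> P}"
  define G1 where "G1 = {P\<in>F. x \<in> P}"
  have fin0: "finite G0" "finite G1" using finF by (auto simp: G0_def G1_def)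
  have "F = G0 \<union> G1" "G0 \<inter> G1 = {}" by (auto simp: G0_def G1_def)
  hence cF: "card F = card G0 + card G1" using fin0 by (simp add: card_Un_disjoint)
  have inj: "inj_on (\<lambda>P. P - {x}) G1"
    unfolding inj_on_def G1_def by (metis insert_Diff mem_Collect_eq)
  have "(\<lambda>P. P - {x}) ` G0 = (\<lambda>P. P) ` G0" by (rule image_cong) (auto simp: G0_def)
  hence "(\<lambda>P. P - {x}) ` G0 = G0" by simp
  hence "F1 = G0 \<union> (\<lambda>P. P - {x}) ` G1"
    unfolding F1_def using \<open>F = G0 \<union> G1\<close> by (metis image_Un)
  moreover have "G0 \<inter> (\<lambda>P. P - {x}) ` G1 = F2"
  proof
    show "G0 \<inter> (\<lambda>P. P - {x}) ` G1 \<subseteq> F2"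
      using FS by (auto simp: G0_def G1_def F2_def insert_absorb)
    show "F2 \<subseteq> G0 \<inter> (\<lambda>P. P - {x}) ` G1"
    proof
      fix Q assume "Q \<in> F2"
      hence Q: "Q \<subseteq> S" "Q \<in> F" "insert x Q \<in> F" by (auto simp: F2_def)
      have xQ: "x \<notin> Q" using Q(1) xS by blast
      hence "Q = insert x Q - {x}" by simp
      moreover have "insert x Q \<in> G1" using Q(3) by (simp add: G1_def)
      ultimately have "Q \<in> (\<lambda>P. P - {x}) ` G1" by (rule image_eqI)
      moreover have "Q \<in> G0" using Q(2) xQ by (simp add: G0_def)
      ultimately show "Q \<in> G0 \<inter> (\<lambda>P. P - {x}) ` G1" by blast
    qed
  qed
  ultimately have "card F1 + card F2 = card G0 + card ((\<lambda>P. P - {x}) ` G1)"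
    using card_Un_Int[of G0 "(\<lambda>P. P - {x}) ` G1"] fin0 by auto
  thus ?thesis using cF card_image[OF inj] by simp
qed

lemma vcb_F1: "vcb F (insert x S) d \<Longrightarrow> vcb F1 S d"
  unfolding vcb_def
proof safe
  fix Y assume h: "\<forall>Y\<subseteq>insert x S. shatters F Y \<longrightarrow> card Y \<le> d" "Y \<subseteq> S" "shatters F1 Y"
  have "shatters F Y"
  proof -
    have xY: "x \<notin> Y" using h(2) xS by blast
    have "(\<lambda>Sa. Y \<inter> Sa) ` F1 = (\<lambda>P. Y \<inter> (P - {x})) ` F" by (simp add: F1_def image_image)
    also have "\<dots> = (\<lambda>Sa. Y \<inter> Sa) ` F" using xY by (intro image_cong) auto
    finally have "(\<lambda>Sa. Y \<inter> Sa) ` F1 = (\<lambda>Sa. Y \<inter> Sa) ` F" .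
    thus ?thesis using h(3) by (simp add: shatters_def)
  qed
  thus "card Y \<le> d" using h by auto
qed

lemma shatters_F2: "Y \<subseteq> S \<Longrightarrow> shatters F2 Y \<Longrightarrow> shatters F (insert x Y)"
  unfolding shatters_def
proof
  assume Y: "Y \<subseteq> S" and sh: "(\<inter>) Y ` F2 = Pow Y"
  show "(\<inter>) (insert x Y) ` F \<subseteq> Pow (insert x Y)" by auto
  show "Pow (insert x Y) \<subseteq> (\<inter>) (insert x Y) ` F"
  proof
    fix Z assume "Z \<in> Pow (insert x Y)"
    hence "Z - {x} \<in> Pow Y" by auto
    with sh obtain Q where Q: "Q \<in> F2" "Z - {x} = Y \<inter> Q" by blast
    hence QS: "Q \<subseteq> S" "Q \<in> F" "insert x Q \<in> F" by (auto simp: F2_def)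
    show "Z \<in> (\<inter>) (insert x Y) ` F"
    proof (cases "x \<in> Z")
      case True
      have "Z = insert x Y \<inter> insert x Q" using True Q(2) by auto
      thus ?thesis using QS by blast
    next
      case False
      have "Z = insert x Y \<inter> Q" using False Q(2) QS(1) xS by auto
      thus ?thesis using QS by blast
    qed
  qed
qed

lemma vcb_F2: "vcb F (insert x S) (Suc e) \<Longrightarrow> vcb F2 S e"
  unfolding vcb_def
proof safe
  fix Y assume h: "\<forall>Y\<subseteq>insert x S. shatters F Y \<longrightarrow> card Y \<le> Suc e" "Y \<subseteq> S" "shatters F2 Y"
  have "card (insert x Y) \<le> Suc e" using h shatters_F2 by (meson insert_mono)
  moreover have "finite Y" using h(2) fin finite_subset by auto
  moreover have "x \<notin> Y" using h(2) xS by auto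
  ultimately show "card Y \<le> e" by simp
qed

lemma F2_empty: "vcb F (insert x S) 0 \<Longrightarrow> F2 = {}"
proof (rule ccontr)
  assume v: "vcb F (insert x S) 0" and "F2 \<noteq> {}"
  then obtain Q where "Q \<in> F2" by auto
  hence "shatters F2 {}" by (auto simp: shatters_def)
  hence "shatters F {x}" using shatters_F2[of "{}"] by auto
  thus False using v by (auto simp: vcb_def)
qed

lemma edges_step: "card (edges F (insert x S)) \<le> card F2 + card (edges F1 S) + card (edges F2 S)"
proof -
  define Ex where "Ex = {(P,y). P \<in> F \<and> y = x \<and> y \<notin> P \<and> insert y P \<in> F}"
  define Er where "Er = {(P,y). P \<in> F \<and> y \<in> S \<and> y \<notin> P \<and> insert y P \<in> F}"
  define A1 where "A1 = {(P,y). (P,y) \<in> Er \<and> x \<notin> P}"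
  define A2 where "A2 = {(P,y). (P,y) \<in> Er \<and> x \<in> P}"
  define h where "h = (\<lambda>(P::'a set,y::'a). (P - {x}, y))"
  have finE: "finite Ex" "finite Er"
    by (rule finite_subset[of _ "F \<times> insert x S"], auto simp: Ex_def Er_def finF fin)+
  have "edges F (insert x S) = Ex \<union> Er" "Ex \<inter> Er = {}"
    using xS by (auto simp: edges_def Ex_def Er_def)
  hence c1: "card (edges F (insert x S)) = card Ex + card Er" using finE by (simp add: card_Un_disjoint)
  have "Ex = (\<lambda>Q. (Q,x)) ` F2"
  proof
    show "Ex \<subseteq> (\<lambda>Q. (Q,x)) ` F2"
    proof
      fix e assume "e \<in> Ex"
      then obtain P where P: "e = (P,x)" "P \<in> F" "x \<notin> P" "insert x P \<in> F" by (auto simp: Ex_def)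
      have "P \<subseteq> S" using P(2,3) FS by blast
      hence "P \<in> F2" using P by (simp add: F2_def)
      thus "e \<in> (\<lambda>Q. (Q,x)) ` F2" using P(1) by blast
    qed
    show "(\<lambda>Q. (Q,x)) ` F2 \<subseteq> Ex"
    proof
      fix e assume "e \<in> (\<lambda>Q. (Q,x)) ` F2"
      then obtain Q where Q: "e = (Q,x)" "Q \<subseteq> S" "Q \<in> F" "insert x Q \<in> F" by (auto simp: F2_def)
      have "x \<notin> Q" using Q(2) xS by blast
      thus "e \<in> Ex" using Q by (simp add: Ex_def)
    qed
  qed
  hence c2: "card Ex = card F2" by (simp add: card_image inj_on_def)
  have fA: "finite A1" "finite A2" using finE by (auto simp: A1_def A2_def intro: finite_subset)
  have "Er = A1 \<union> A2" "A1 \<inter> A2 = {}" by (auto simp: A1_def A2_def)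
  hence c3: "card Er = card A1 + card A2" using fA by (simp add: card_Un_disjoint)
  have i1: "inj_on h A1" by (auto simp: inj_on_def h_def A1_def)
  have i2: "inj_on h A2" by (auto simp: inj_on_def h_def A2_def)
  have hE: "h e \<in> edges F1 S" if "e \<in> Er" for e
  proof -
    obtain P y where P: "e = (P,y)" "P \<in> F" "y \<in> S" "y \<notin> P" "insert y P \<in> F"
      using \<open>e \<in> Er\<close> by (auto simp: Er_def)
    have "y \<noteq> x" using P(3) xS by blast
    hence i: "insert y (P - {x}) = insert y P - {x}" by blast
    have m1: "P - {x} \<in> F1" using P(2) by (simp add: F1_def)
    have m2: "insert y (P - {x}) \<in> F1" unfolding i using P(5) by (simp add: F1_def)
    show ?thesis using P m1 m2 by (simp add: h_def edges_def)
  qed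
  have s1: "h ` A1 \<union> h ` A2 \<subseteq> edges F1 S"
    using hE by (auto simp: A1_def A2_def)
  have s2: "h ` A1 \<inter> h ` A2 \<subseteq> edges F2 S"
  proof
    fix e assume "e \<in> h ` A1 \<inter> h ` A2"
    then obtain P1 y P2 where e: "e = (P1 - {x}, y)" "(P1,y) \<in> A1" "(P2,y) \<in> A2" "P1 - {x} = P2 - {x}"
      unfolding h_def by auto
    have P2: "P2 = insert x P1" using e by (auto simp: A1_def A2_def)
    have P1S: "P1 \<subseteq> S" using e(2) FS xS by (auto simp: A1_def Er_def)
    have h1: "P1 \<in> F" "y \<in> S" "y \<notin> P1" "insert y P1 \<in> F" "x \<notin> P1"
      using e(2) by (auto simp: A1_def Er_def)
    have h2: "P2 \<in> F" "insert y P2 \<in> F" using e(3) by (auto simp: A2_def Er_def)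
    have ex: "e = (P1, y)" using e(1) h1(5) by simp
    have "insert x (insert y P1) = insert y P2" using P2 by blast
    hence m: "insert x (insert y P1) \<in> F" using h2(2) by simp
    have m2: "insert x P1 \<in> F" using h2(1) P2 by simp
    have "P1 \<in> F2" using P1S h1(1) m2 by (simp add: F2_def)
    moreover have "insert y P1 \<in> F2" using P1S h1(2,4) m by (simp add: F2_def)
    ultimately have "P1 \<in> F2" "insert y P1 \<in> F2" by auto
    thus "e \<in> edges F2 S" using ex h1 by (simp add: edges_def)
  qed
  have "finite F1" unfolding F1_def using finF by (rule finite_imageI)
  hence fin1: "finite (edges F1 S)" using fin by (rule edges_finite)
  have "card (h ` A1) + card (h ` A2) = card (h ` A1 \<union> h ` A2) + card (h ` A1 \<inter> h ` A2)"
    using fA by (intro card_Un_Int) auto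
  also have "\<dots> \<le> card (edges F1 S) + card (edges F2 S)"
    using s1 s2 fin1 edges_finite[of F2 S] F12_sub fin
    by (intro add_mono card_mono) (auto intro: finite_subset)
  finally show ?thesis using c1 c2 c3 card_image[OF i1] card_image[OF i2] by simp
qed

end

lemma sauer_edges:
  assumes "finite S" "F \<subseteq> Pow S" "vcb F S d"
  shows "card F \<le> Phi d (card S) \<and> card (edges F S) \<le> d * card F"
  using assms
proof (induction S arbitrary: F d rule: finite_induct)
  case empty
  hence "F \<subseteq> {{}}" by auto
  hence "card F \<le> card {{}::'a set}" by (intro card_mono) auto
  hence "card F \<le> 1" by simp
  moreover have "edges F {} = {}" by (simp add: edges_def)
  ultimately show ?case by simp
next
  case (insert x S)
  note ctx = insert(2) insert(4) insert(1)
  have IH1: "card (F1 F x) \<le> Phi d (card S) \<and> card (edges (F1 F x) S) \<le> d * card (F1 F x)"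
    by (rule insert.IH[OF F12_sub(1)[OF ctx] vcb_F1[OF ctx insert(5)]])
  show ?case
  proof (cases d)
    case 0
    have e: "F2 F S x = {}" using F2_empty[OF ctx] insert(5) 0 by auto
    have c: "card (insert x S) = Suc (card S)" using insert(1,2) by simp
    have a1: "card F = card (F1 F x)" using card_F12[OF ctx] e by simp
    have a2: "card (edges F (insert x S)) \<le> card (edges (F1 F x) S)"
      using edges_step[OF ctx] e by (simp add: edges_def)
    show ?thesis using a1 a2 IH1 0 c by simp
  next
    case (Suc e)
    have IH2: "card (F2 F S x) \<le> Phi e (card S) \<and> card (edges (F2 F S x) S) \<le> e * card (F2 F S x)"
      using insert(5) Suc by (intro insert.IH[OF F12_sub(2)[OF ctx] vcb_F2[OF ctx]]) simp
    have c: "card (insert x S) = Suc (card S)" using insert(1,2) by simp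
    define c1 where "c1 = card (F1 F x)"
    define c2 where "c2 = card (F2 F S x)"
    have a1: "card F = c1 + c2" using card_F12[OF ctx] by (simp add: c1_def c2_def)
    have b1: "c1 \<le> Phi (Suc e) (card S)" "c2 \<le> Phi e (card S)" using IH1 IH2 Suc by (auto simp: c1_def c2_def)
    have b2: "card (edges F (insert x S)) \<le> c2 + Suc e * c1 + e * c2"
    proof -
      have b2a: "card (edges (F1 F x) S) \<le> Suc e * c1" using IH1 Suc c1_def by simp
      have b2b: "card (edges (F2 F S x) S) \<le> e * c2" using IH2 c2_def by simp
      show ?thesis using edges_step[OF ctx] b2a b2b c2_def by linarith
    qed
    have "card F \<le> Phi (Suc e) (Suc (card S))" using a1 b1 Phi_Suc[of e "card S"] by linarith
    hence "card F \<le> Phi d (card (insert x S))" using c Suc by simp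
    moreover have "c2 + Suc e * c1 + e * c2 = d * card F" using a1 Suc by (simp add: algebra_simps)
    ultimately show ?thesis using b2 by simp
  qed
qed




lemma vcb_sub: "vcb G S d \<Longrightarrow> G' \<subseteq> G \<Longrightarrow> vcb G' S d"
  unfolding vcb_def using shatters_mono by blast

lemma weighted_edges:
  fixes w :: "'a set \<Rightarrow> nat"
  assumes fin: "finite S" and GS: "G \<subseteq> Pow S" and v: "vcb G S d"
  shows "(\<Sum>e\<in>edges G S. min (w (fst e)) (w (insert (snd e) (fst e)))) \<le> d * (\<Sum>R\<in>G. w R)"
proof -
  define M where "M = (\<Sum>R\<in>G. w R)"
  define L where "L t = {R\<in>G. t \<le> w R}" for t
  have finG: "finite G" using fin GS by (meson finite_Pow_iff finite_subset)
  have finE: "finite (edges G S)" using finG fin by (rule edges_finite)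
  have wM: "R \<in> G \<Longrightarrow> w R \<le> M" for R using finG by (auto simp: M_def intro: member_le_sum)
  have layer: "card (edges (L t) S) \<le> d * card (L t)" for t
  proof -
    have "L t \<subseteq> G" by (auto simp: L_def)
    thus ?thesis using sauer_edges[of S "L t" d] fin GS vcb_sub[OF v] by auto
  qed
  have cnt: "card ({1..M} \<inter> {t. t \<le> m}) = m" if "m \<le> M" for m
  proof -
    have "{1..M} \<inter> {t. t \<le> m} = {1..m}" using that by auto
    thus ?thesis by simp
  qed
  have e1: "min (w (fst e)) (w (insert (snd e) (fst e))) = (\<Sum>t\<in>{1..M}. of_bool (e \<in> edges (L t) S))"
    if e: "e \<in> edges G S" for e
  proof -
    obtain R y where ey: "e = (R,y)" by fastforce
    have h: "R \<in> G" "insert y R \<in> G" "y \<in> S" "y \<notin> R" using e ey by (auto simp: edges_def)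
    have eq: "{t. e \<in> edges (L t) S} = {t. t \<le> min (w R) (w (insert y R))}"
      using h ey by (auto simp: edges_def L_def)
    have mM: "min (w R) (w (insert y R)) \<le> M" using wM h by (meson min.coboundedI1)
    have "(\<Sum>t\<in>{1..M}. (of_bool (e \<in> edges (L t) S) :: nat)) = card ({1..M} \<inter> {t. e \<in> edges (L t) S})"
      by simp
    also have "\<dots> = card ({1..M} \<inter> {t. t \<le> min (w R) (w (insert y R))})" by (simp only: eq)
    also have "\<dots> = min (w R) (w (insert y R))" by (rule cnt[OF mM])
    finally show ?thesis using ey by simp
  qed
  have "(\<Sum>e\<in>edges G S. min (w (fst e)) (w (insert (snd e) (fst e))))
      = (\<Sum>e\<in>edges G S. \<Sum>t\<in>{1..M}. of_bool (e \<in> edges (L t) S))"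
    using e1 by (rule sum.cong[OF refl])
  also have "\<dots> = (\<Sum>t\<in>{1..M}. \<Sum>e\<in>edges G S. of_bool (e \<in> edges (L t) S))"
    by (rule sum.swap)
  also have "\<dots> = (\<Sum>t\<in>{1..M}. card (edges (L t) S))"
  proof (rule sum.cong[OF refl])
    fix t
    have "edges G S \<inter> {e. e \<in> edges (L t) S} = edges (L t) S"
      by (auto simp: edges_def L_def)
    thus "(\<Sum>e\<in>edges G S. of_bool (e \<in> edges (L t) S)) = card (edges (L t) S)"
      using finE by simp
  qed
  also have "\<dots> \<le> (\<Sum>t\<in>{1..M}. d * card (L t))" by (rule sum_mono) (rule layer)
  also have "\<dots> = d * (\<Sum>t\<in>{1..M}. card (L t))" by (simp add: sum_distrib_left)
  also have "(\<Sum>t\<in>{1..M}. card (L t)) = (\<Sum>t\<in>{1..M}. \<Sum>R\<in>G. of_bool (t \<le> w R))"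
  proof (rule sum.cong[OF refl])
    fix t
    have "G \<inter> {R. t \<le> w R} = L t" by (auto simp: L_def)
    thus "card (L t) = (\<Sum>R\<in>G. of_bool (t \<le> w R))" using finG by simp
  qed
  also have "\<dots> = (\<Sum>R\<in>G. \<Sum>t\<in>{1..M}. of_bool (t \<le> w R))" by (rule sum.swap)
  also have "\<dots> = (\<Sum>R\<in>G. w R)"
  proof (rule sum.cong[OF refl])
    fix R assume "R \<in> G"
    thus "(\<Sum>t\<in>{1..M}. of_bool (t \<le> w R)) = w R" using cnt wM by simp
  qed
  finally show ?thesis by (simp add: M_def)
qed

lemma class_bound:
  fixes C :: "'a set set" and S U :: "'a set" and \<delta> :: real
  assumes finX: "finite U" and CX: "C \<subseteq> Pow U" and Cne: "C \<noteq> {}"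
    and agree: "\<And>P P'. P \<in> C \<Longrightarrow> P' \<in> C \<Longrightarrow> P \<inter> S = P' \<inter> S"
    and sep: "\<And>P P'. P \<in> C \<Longrightarrow> P' \<in> C \<Longrightarrow> P \<noteq> P' \<Longrightarrow> \<delta> \<le> card (sdiff P P')"
  shows "(real (card C) - 1) * \<delta> \<le> 2 * (\<Sum>a\<in>U-S. real (min (card {P\<in>C. a\<in>P}) (card {P\<in>C. a\<notin>P})))"
proof -
  have finC: "finite C" using finX CX by (meson finite_Pow_iff finite_subset)
  have finP: "P \<in> C \<Longrightarrow> finite P" for P using CX finX by (meson PowD finite_subset subsetD)
  define cp where "cp a = card {P\<in>C. a\<in>P}" for a
  define cm where "cm a = card {P\<in>C. a\<notin>P}" for a
  have cpm: "cp a + cm a = card C" for a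
  proof -
    have "C = {P\<in>C. a\<in>P} \<union> {P\<in>C. a\<notin>P}" by auto
    thus ?thesis unfolding cp_def cm_def using finC
      by (metis (no_types, lifting) card_Un_disjoint disjoint_iff finite_Un mem_Collect_eq)
  qed
  have minb: "real (cp a) * real (cm a) \<le> real (card C) * real (min (cp a) (cm a))" for a
  proof -
    have "cp a * cm a \<le> (cp a + cm a) * min (cp a) (cm a)"
      by (cases "cp a \<le> cm a") (auto simp: min_def algebra_simps)
    hence "real (cp a * cm a) \<le> real ((cp a + cm a) * min (cp a) (cm a))" by linarith
    thus ?thesis using cpm by simp
  qed
  have prod: "real (cp a) * real (cm a) = (\<Sum>P\<in>C. \<Sum>P'\<in>C. of_bool (a\<in>P) * of_bool (a\<notin>P'))" for a
  proof -
    have "real (cp a) = (\<Sum>P\<in>C. of_bool (a\<in>P))" using finC by (simp add: cp_def Collect_conj_eq Int_commute)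
    moreover have "real (cm a) = (\<Sum>P\<in>C. of_bool (a\<notin>P))" using finC by (simp add: cm_def Collect_conj_eq Int_commute)
    ultimately show ?thesis by (simp add: sum_product)
  qed
  have diffs: "(\<Sum>a\<in>U-S. of_bool (a\<in>P) * of_bool (a\<notin>P')) = real (card (P - P'))"
    if "P\<in>C" "P'\<in>C" for P P'
  proof -
    have "(U - S) \<inter> {a. a \<in> P \<and> a \<notin> P'} = P - P'"
      using that CX agree[OF that] by blast
    hence "(\<Sum>a\<in>U-S. (of_bool (a\<in>P \<and> a\<notin>P') :: real)) = real (card (P - P'))"
      using finX by simp
    thus ?thesis by (simp add: of_bool_conj)
  qed
  have "(\<Sum>a\<in>U-S. real (cp a) * real (cm a)) = (\<Sum>a\<in>U-S. \<Sum>P\<in>C. \<Sum>P'\<in>C. of_bool (a\<in>P) * of_bool (a\<notin>P'))"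
    by (simp add: prod)
  also have "\<dots> = (\<Sum>P\<in>C. \<Sum>a\<in>U-S. \<Sum>P'\<in>C. of_bool (a\<in>P) * of_bool (a\<notin>P'))" by (rule sum.swap)
  also have "\<dots> = (\<Sum>P\<in>C. \<Sum>P'\<in>C. \<Sum>a\<in>U-S. of_bool (a\<in>P) * of_bool (a\<notin>P'))" by (simp add: sum.swap[of _ "U-S"])
  also have "\<dots> = (\<Sum>P\<in>C. \<Sum>P'\<in>C. real (card (P - P')))" using diffs by simp
  finally have s1: "(\<Sum>a\<in>U-S. real (cp a) * real (cm a)) = (\<Sum>P\<in>C. \<Sum>P'\<in>C. real (card (P - P')))" .
  have s2: "(\<Sum>P\<in>C. \<Sum>P'\<in>C. real (card (P - P'))) = (\<Sum>P\<in>C. \<Sum>P'\<in>C. real (card (P' - P)))"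
    by (rule sum.swap)
  have sdc: "real (card (sdiff P P')) = real (card (P - P')) + real (card (P' - P))" if "P\<in>C" "P'\<in>C" for P P'
  proof -
    have "card (sdiff P P') = card (P - P') + card (P' - P)"
      unfolding sdiff_def using finP[OF that(1)] finP[OF that(2)] by (subst card_Un_disjoint) auto
    thus ?thesis by simp
  qed
  have s3: "(\<Sum>P\<in>C. \<Sum>P'\<in>C. real (card (sdiff P P'))) = 2 * (\<Sum>P\<in>C. \<Sum>P'\<in>C. real (card (P - P')))"
    using s2 sdc by (simp add: sum.distrib)
  have lowP: "(real (card C) - 1) * \<delta> \<le> (\<Sum>P'\<in>C. real (card (sdiff P P')))" if "P \<in> C" for P
  proof -
    have "(\<Sum>P'\<in>C. real (card (sdiff P P'))) = real (card (sdiff P P)) + (\<Sum>P'\<in>C-{P}. real (card (sdiff P P')))"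
      using finC that by (rule sum.remove)
    also have "real (card (sdiff P P)) = 0" by (simp add: sdiff_def)
    finally have eq: "(\<Sum>P'\<in>C. real (card (sdiff P P'))) = (\<Sum>P'\<in>C-{P}. real (card (sdiff P P')))" by simp
    have ge: "(\<Sum>P'\<in>C-{P}. \<delta>) \<le> (\<Sum>P'\<in>C-{P}. real (card (sdiff P P')))"
      using sep that by (intro sum_mono) auto
    have "card C > 0" using finC that card_gt_0_iff by blast
    hence c1: "card C \<ge> 1" by simp
    have cd: "real (card (C - {P})) = real (card C) - 1"
      using that finC c1 by (simp add: card_Diff_singleton of_nat_diff)
    show ?thesis using eq ge cd by simp
  qed
  have "real (card C) * ((real (card C) - 1) * \<delta>) \<le> (\<Sum>P\<in>C. \<Sum>P'\<in>C. real (card (sdiff P P')))"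
    using sum_mono[of C "\<lambda>_. (real (card C) - 1) * \<delta>", OF lowP] by simp
  also have "\<dots> = 2 * (\<Sum>a\<in>U-S. real (cp a) * real (cm a))" using s1 s3 by simp
  also have "\<dots> \<le> 2 * (\<Sum>a\<in>U-S. real (card C) * real (min (cp a) (cm a)))"
    using minb by (simp add: sum_mono)
  also have "\<dots> = real (card C) * (2 * (\<Sum>a\<in>U-S. real (min (cp a) (cm a))))"
    by (simp add: sum_distrib_left[symmetric] mult_ac)
  finally have "real (card C) * ((real (card C) - 1) * \<delta>) \<le> real (card C) * (2 * (\<Sum>a\<in>U-S. real (min (cp a) (cm a))))" .
  moreover have "real (card C) > 0" using finC Cne by (simp add: card_gt_0_iff)
  ultimately show ?thesis unfolding cp_def cm_def by (simp add: mult_le_cancel_left_pos)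
qed




definition W :: "'a set set \<Rightarrow> 'a set \<Rightarrow> 'a set \<Rightarrow> nat" where
  "W F S Q = card {P\<in>F. P \<inter> S = Q}"
definition T :: "'a set set \<Rightarrow> 'a set \<Rightarrow> 'a \<Rightarrow> nat" where
  "T F S a = (\<Sum>Q\<in>Pow S. min (W F (insert a S) (insert a Q)) (W F (insert a S) Q))"

lemma vcb_proj: "vcb F U d \<Longrightarrow> S \<subseteq> U \<Longrightarrow> vcb (proj F S) S d"
  unfolding vcb_def
proof safe
  fix Y assume h: "\<forall>Y\<subseteq>U. shatters F Y \<longrightarrow> card Y \<le> d" "S \<subseteq> U" "Y \<subseteq> S" "shatters (proj F S) Y"
  have "(\<lambda>Z. Y \<inter> Z) ` proj F S = (\<lambda>Z. Y \<inter> Z) ` F"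
  proof -
    have "(\<lambda>Z. Y \<inter> Z) ` proj F S = (\<lambda>P. Y \<inter> (P \<inter> S)) ` F" by (simp add: proj_def image_image)
    also have "\<dots> = (\<lambda>Z. Y \<inter> Z) ` F" using h(3) by (intro image_cong) auto
    finally show ?thesis .
  qed
  hence "shatters F Y" using h(4) by (simp add: shatters_def)
  thus "card Y \<le> d" using h by auto
qed

lemma sum_W:
  assumes fin: "finite F" shows "(\<Sum>Q\<in>proj F S. W F S Q) = card F"
proof -
  have "card F = (\<Sum>P\<in>F. (1::nat))" by simp
  also have "\<dots> = (\<Sum>Q\<in>(\<lambda>P. P \<inter> S) ` F. \<Sum>P\<in>{x\<in>F. x \<inter> S = Q}. (1::nat))"
    by (rule sum.image_gen[OF fin])
  also have "\<dots> = (\<Sum>Q\<in>proj F S. W F S Q)" by (simp add: proj_def W_def)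
  finally show ?thesis by simp
qed

lemma proj_sub: "proj F S \<subseteq> Pow S" by (auto simp: proj_def)

lemma lower_bound:
  fixes \<delta> :: real
  assumes finX: "finite U" and FX: "F \<subseteq> Pow U" and v: "vcb F U d" and SX: "S \<subseteq> U"
    and sep: "\<And>P P'. P \<in> F \<Longrightarrow> P' \<in> F \<Longrightarrow> P \<noteq> P' \<Longrightarrow> \<delta> \<le> card (sdiff P P')"
    and d0: "0 \<le> \<delta>"
  shows "(real (card F) - real (Phi d (card S))) * \<delta> \<le> 2 * real (\<Sum>a\<in>U-S. T F S a)"
proof -
  have finF: "finite F" using finX FX by (meson finite_Pow_iff finite_subset)
  have finS: "finite S" using finX SX finite_subset by auto
  have finproj: "finite (proj F S)" using finF by (simp add: proj_def)
  have cardproj: "card (proj F S) \<le> Phi d (card S)"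
    using sauer_edges[OF finS proj_sub vcb_proj[OF v SX]] by simp
  define cl where "cl Q = {P\<in>F. P \<inter> S = Q}" for Q
  define g where "g Q a = real (min (W F (insert a S) (insert a Q)) (W F (insert a S) Q))" for Q a
  have per: "(real (card (cl Q)) - 1) * \<delta> \<le> 2 * (\<Sum>a\<in>U-S. g Q a)" if Q: "Q \<in> proj F S" for Q
  proof -
    have QS: "Q \<subseteq> S" using Q proj_sub by auto
    have e1: "{P\<in>cl Q. a\<in>P} = {P\<in>F. P \<inter> insert a S = insert a Q}" if "a \<in> U - S" for a
      using that QS by (auto simp: cl_def)
    have e2: "{P\<in>cl Q. a\<notin>P} = {P\<in>F. P \<inter> insert a S = Q}" if "a \<in> U - S" for a
      using that QS by (auto simp: cl_def)
    have "(real (card (cl Q)) - 1) * \<delta> \<le> 2 * (\<Sum>a\<in>U-S. real (min (card {P\<in>cl Q. a\<in>P}) (card {P\<in>cl Q. a\<notin>P})))"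
    proof (rule class_bound[OF finX])
      show "cl Q \<subseteq> Pow U" using FX by (auto simp: cl_def)
      show "cl Q \<noteq> {}" using Q by (auto simp: cl_def proj_def)
    qed (auto simp: cl_def intro: sep)
    also have "(\<Sum>a\<in>U-S. real (min (card {P\<in>cl Q. a\<in>P}) (card {P\<in>cl Q. a\<notin>P}))) = (\<Sum>a\<in>U-S. g Q a)"
      by (rule sum.cong[OF refl]) (simp add: e1 e2 g_def W_def)
    finally show ?thesis .
  qed
  have eq1: "(\<Sum>Q\<in>proj F S. (real (card (cl Q)) - 1) * \<delta>) = (real (card F) - real (card (proj F S))) * \<delta>"
  proof -
    have "(\<Sum>Q\<in>proj F S. real (card (cl Q))) = real (card F)"
      using sum_W[OF finF, of S] unfolding W_def cl_def by (metis of_nat_sum)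
    thus ?thesis by (simp add: sum_distrib_right[symmetric] sum_subtractf)
  qed
  have "(real (card F) - real (card (proj F S))) * \<delta> = (\<Sum>Q\<in>proj F S. (real (card (cl Q)) - 1) * \<delta>)"
    using eq1 by simp
  also have "\<dots> \<le> (\<Sum>Q\<in>proj F S. 2 * (\<Sum>a\<in>U-S. g Q a))"
    using per by (intro sum_mono) auto
  also have "\<dots> \<le> (\<Sum>Q\<in>Pow S. 2 * (\<Sum>a\<in>U-S. g Q a))"
    by (rule sum_mono2) (auto simp: finS proj_sub g_def intro: sum_nonneg)
  also have "\<dots> = 2 * (\<Sum>a\<in>U-S. \<Sum>Q\<in>Pow S. g Q a)" by (simp add: sum_distrib_left[symmetric] sum.swap[of _ "Pow S"])
  also have "\<dots> = 2 * real (\<Sum>a\<in>U-S. T F S a)" by (simp add: T_def g_def)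
  finally have "(real (card F) - real (card (proj F S))) * \<delta> \<le> 2 * real (\<Sum>a\<in>U-S. T F S a)" .
  moreover have "(real (card F) - real (Phi d (card S))) * \<delta> \<le> (real (card F) - real (card (proj F S))) * \<delta>"
    using cardproj d0 by (intro mult_right_mono) auto
  ultimately show ?thesis by linarith
qed

lemma upper_bound:
  assumes finX: "finite U" and FX: "F \<subseteq> Pow U" and v: "vcb F U d" and SX: "S' \<subseteq> U"
  shows "(\<Sum>a\<in>S'. T F (S' - {a}) a) \<le> d * card F"
proof -
  have finF: "finite F" using finX FX by (meson finite_Pow_iff finite_subset)
  have finS: "finite S'" using finX SX finite_subset by auto
  define G where "G = proj F S'"
  define f where "f e = min (W F S' (fst e)) (W F S' (insert (snd e) (fst e)))" for e
  define Sg where "Sg = Sigma S' (\<lambda>a. Pow (S' - {a}))"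
  define E' where "E' = (\<lambda>(a,Q). (Q,a)) ` Sg"
  have finSg: "finite Sg" using finS by (auto simp: Sg_def)
  have "(\<Sum>a\<in>S'. T F (S' - {a}) a) = (\<Sum>a\<in>S'. \<Sum>Q\<in>Pow (S' - {a}). f (Q,a))"
  proof (rule sum.cong[OF refl])
    fix a assume "a \<in> S'"
    hence "insert a (S' - {a}) = S'" by auto
    thus "T F (S' - {a}) a = (\<Sum>Q\<in>Pow (S' - {a}). f (Q,a))"
      by (simp add: T_def f_def min.commute)
  qed
  also have "\<dots> = (\<Sum>(a,Q)\<in>Sg. f (Q,a))" unfolding Sg_def
    by (rule sum.Sigma) (auto simp: finS)
  also have "\<dots> = (\<Sum>e\<in>E'. f e)" unfolding E'_def
    by (subst sum.reindex) (auto simp: inj_on_def case_prod_beta)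
  also have "\<dots> = (\<Sum>e\<in>edges G S'. f e)"
  proof (rule sum.mono_neutral_right)
    show "finite E'" using finSg by (simp add: E'_def)
    show "edges G S' \<subseteq> E'"
      by (auto simp: edges_def E'_def Sg_def G_def proj_def image_iff)
    show "\<forall>e\<in>E' - edges G S'. f e = 0"
    proof
      fix e assume e: "e \<in> E' - edges G S'"
      then obtain Q a where eq: "e = (Q,a)" "a \<in> S'" "Q \<subseteq> S' - {a}" by (auto simp: E'_def Sg_def)
      hence "Q \<notin> G \<or> insert a Q \<notin> G" using e by (auto simp: edges_def)
      moreover have "R \<notin> G \<Longrightarrow> W F S' R = 0" for R
        using finF by (auto simp: W_def G_def proj_def)
      ultimately show "f e = 0" using eq by (auto simp: f_def)
    qed
  qed
  also have "\<dots> \<le> d * (\<Sum>R\<in>G. W F S' R)"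
    unfolding f_def G_def by (rule weighted_edges[OF finS proj_sub vcb_proj[OF v SX]])
  also have "(\<Sum>R\<in>G. W F S' R) = card F" unfolding G_def by (rule sum_W[OF finF])
  finally show ?thesis .
qed

lemma double_count:
  assumes finX: "finite U"
  shows "(\<Sum>S\<in>{S. S \<subseteq> U \<and> card S = s}. \<Sum>a\<in>U-S. T F S a)
       = (\<Sum>S'\<in>{S. S \<subseteq> U \<and> card S = Suc s}. \<Sum>a\<in>S'. T F (S' - {a}) a)"
proof -
  have f1: "finite {S. S \<subseteq> U \<and> card S = s}" "finite {S. S \<subseteq> U \<and> card S = Suc s}"
    using finX by (auto intro: finite_subset[of _ "Pow U"])
  have fS: "\<And>S. S \<subseteq> U \<Longrightarrow> finite S" using finX finite_subset by blast
  have "(\<Sum>S\<in>{S. S \<subseteq> U \<and> card S = s}. \<Sum>a\<in>U-S. T F S a)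
      = (\<Sum>(S,a)\<in>Sigma {S. S \<subseteq> U \<and> card S = s} (\<lambda>S. U - S). T F S a)"
    by (rule sum.Sigma) (auto simp: f1 finX)
  also have "\<dots> = (\<Sum>(S',a)\<in>Sigma {S. S \<subseteq> U \<and> card S = Suc s} (\<lambda>S. S). T F (S' - {a}) a)"
    using fS by (intro sum.reindex_bij_witness[where i = "\<lambda>(S',a). (S' - {a}, a)" and j = "\<lambda>(S,a). (insert a S, a)"])
      (auto simp: card_Diff_singleton insert_absorb)
  also have "\<dots> = (\<Sum>S'\<in>{S. S \<subseteq> U \<and> card S = Suc s}. \<Sum>a\<in>S'. T F (S' - {a}) a)"
    by (rule sum.Sigma[symmetric]) (auto simp: f1 finX intro: finite_subset)
  finally show ?thesis .
qed

lemma binom_id: "Suc s * (n choose Suc s) = (n - s) * (n choose s)"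
proof (cases n)
  case 0 thus ?thesis by simp
next
  case (Suc m)
  thus ?thesis using Suc_times_binomial[of s m] binomial_absorb_comp[of "Suc m" s] by simp
qed

lemma packing_core:
  fixes \<delta> :: real
  assumes finX: "finite U" and FX: "F \<subseteq> Pow U" and v: "vcb F U d" and sn: "s \<le> card U"
    and sep: "\<And>P P'. P \<in> F \<Longrightarrow> P' \<in> F \<Longrightarrow> P \<noteq> P' \<Longrightarrow> \<delta> \<le> card (sdiff P P')"
    and d0: "0 \<le> \<delta>"
  shows "(real (card F) - real (Phi d s)) * \<delta> * real (Suc s) \<le> 2 * real (card U - s) * real d * real (card F)"
proof -
  define n where "n = card U"
  define Ss where "Ss = {S. S \<subseteq> U \<and> card S = s}"
  define Ss1 where "Ss1 = {S. S \<subseteq> U \<and> card S = Suc s}"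
  have cSs: "card Ss = n choose s" "card Ss1 = n choose Suc s"
    using n_subsets[OF finX] by (auto simp: Ss_def Ss1_def n_def)
  have "real (n choose s) * ((real (card F) - real (Phi d s)) * \<delta>) = (\<Sum>S\<in>Ss. (real (card F) - real (Phi d s)) * \<delta>)"
    using cSs by simp
  also have "\<dots> \<le> (\<Sum>S\<in>Ss. 2 * real (\<Sum>a\<in>U-S. T F S a))"
    using lower_bound[OF finX FX v _ sep d0] by (intro sum_mono) (auto simp: Ss_def)
  also have "\<dots> = 2 * real (\<Sum>S\<in>Ss. \<Sum>a\<in>U-S. T F S a)" by (simp add: sum_distrib_left)
  also have "(\<Sum>S\<in>Ss. \<Sum>a\<in>U-S. T F S a) = (\<Sum>S'\<in>Ss1. \<Sum>a\<in>S'. T F (S' - {a}) a)"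
    unfolding Ss_def Ss1_def by (rule double_count[OF finX])
  also have "\<dots> \<le> (\<Sum>S'\<in>Ss1. d * card F)"
    using upper_bound[OF finX FX v] by (intro sum_mono) (auto simp: Ss1_def)
  also have "\<dots> = (n choose Suc s) * (d * card F)" using cSs by simp
  finally have A: "real (n choose s) * ((real (card F) - real (Phi d s)) * \<delta>) \<le> 2 * real ((n choose Suc s) * (d * card F))"
    by linarith
  have B: "real (Suc s) * real (n choose Suc s) = real (n - s) * real (n choose s)"
    using binom_id[of s n] by (metis of_nat_mult)
  have "real (n choose s) * ((real (card F) - real (Phi d s)) * \<delta> * real (Suc s))
      \<le> real (Suc s) * (2 * real ((n choose Suc s) * (d * card F)))"
    using mult_left_mono[OF A, of "real (Suc s)"] by (simp add: algebra_simps)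
  also have "\<dots> = real (n choose s) * (2 * real (n - s) * real d * real (card F))"
    using B by (simp add: algebra_simps)
  finally have C: "real (n choose s) * ((real (card F) - real (Phi d s)) * \<delta> * real (Suc s))
      \<le> real (n choose s) * (2 * real (n - s) * real d * real (card F))" .
  have "real (n choose s) > 0" using sn by (simp add: n_def)
  with C show ?thesis by (simp add: n_def mult_le_cancel_left_pos)
qed




lemma Phi_mono: "m \<le> m' \<Longrightarrow> Phi d m \<le> Phi d m'"
  unfolding Phi_def by (intro sum_mono binomial_right_mono)

lemma Phi_bound:
  assumes d1: "1 \<le> d" and dk: "d \<le> k"
  shows "real (Phi d k) \<le> (exp 1 * real k / real d) ^ d"
proof -
  define r where "r = real k / real d"
  define q where "q = real d / real k"
  have kpos: "real k > 0" "real d > 0" using d1 dk by auto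
  have r1: "r \<ge> 1" using dk kpos by (simp add: r_def)
  have qr: "q * r = 1" using kpos by (simp add: q_def r_def)
  have q0: "q \<ge> 0" by (simp add: q_def)
  have "real (Phi d k) = (\<Sum>i\<le>d. real (k choose i))" by (simp add: Phi_def)
  also have "\<dots> \<le> (\<Sum>i\<le>d. real (k choose i) * r ^ (d - i))"
  proof (rule sum_mono)
    fix i assume "i \<in> {..d}"
    have "1 \<le> r ^ (d - i)" by (rule one_le_power[OF r1])
    thus "real (k choose i) \<le> real (k choose i) * r ^ (d - i)"
      using mult_left_mono[of 1 "r ^ (d - i)" "real (k choose i)"] by simp
  qed
  also have "\<dots> = (\<Sum>i\<le>d. r ^ d * (real (k choose i) * q ^ i))"
  proof (rule sum.cong[OF refl])
    fix i assume "i \<in> {..d}"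
    hence "r ^ d = r ^ (d - i) * r ^ i" by (simp add: power_add[symmetric])
    hence "r ^ d * q ^ i = r ^ (d - i) * (q * r) ^ i" by (simp add: power_mult_distrib)
    thus "real (k choose i) * r ^ (d - i) = r ^ d * (real (k choose i) * q ^ i)"
      using qr by simp
  qed
  also have "\<dots> = r ^ d * (\<Sum>i\<le>d. real (k choose i) * q ^ i)" by (simp add: sum_distrib_left)
  also have "\<dots> \<le> r ^ d * (\<Sum>i\<le>k. real (k choose i) * q ^ i)"
    using dk q0 r1 by (intro mult_left_mono sum_mono2) auto
  also have "(\<Sum>i\<le>k. real (k choose i) * q ^ i) = (q + 1) ^ k"
    by (simp add: binomial_ring)
  also have "(q + 1) ^ k \<le> exp q ^ k"
    using q0 exp_ge_add_one_self[of q] by (intro power_mono) (auto simp: add.commute)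
  also have "exp q ^ k = exp (real d)"
    using kpos by (simp add: exp_of_nat_mult[symmetric] q_def)
  also have "exp (real d) = exp 1 ^ d"
    using exp_of_nat_mult[of d 1] by simp
  finally have "real (Phi d k) \<le> r ^ d * exp 1 ^ d" using r1 by simp
  thus ?thesis by (simp add: r_def power_mult_distrib[symmetric] mult.commute)
qed

lemma final_num:
  fixes \<epsilon> :: real
  assumes d1: "1 \<le> d" and e0: "0 < \<epsilon>" and e1: "\<epsilon> < 1"
  shows "2 * real (Phi d (nat \<lceil>4 * real d / \<epsilon>\<rceil>)) \<le> (30 / \<epsilon>) ^ d"
proof -
  define k where "k = nat \<lceil>4 * real d / \<epsilon>\<rceil>"
  have dpos: "real d \<ge> 1" using d1 by simp
  have k1: "real k \<ge> 4 * real d / \<epsilon>" unfolding k_def by linarith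
  have k2: "real k \<le> 4 * real d / \<epsilon> + 1" unfolding k_def
    using e0 by (simp add: of_nat_nat)
  have "4 * real d / \<epsilon> \<ge> 4 * real d" using e0 e1 dpos by (simp add: le_divide_eq)
  hence dk: "d \<le> k" using k1 dpos by linarith
  have "1 \<le> real d / \<epsilon>" using e0 e1 dpos by (simp add: le_divide_eq)
  moreover have "5 * real d / \<epsilon> = 4 * real d / \<epsilon> + real d / \<epsilon>" by (simp add: field_simps)
  ultimately have k3: "real k \<le> 5 * real d / \<epsilon>" using k2 by linarith
  have "real k / real d \<le> 5 / \<epsilon>" using k3 dpos e0 by (simp add: field_simps)
  hence "exp 1 * real k / real d \<le> exp 1 * (5 / \<epsilon>)" by (simp add: mult_left_mono times_divide_eq_right[symmetric] del: times_divide_eq_right)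
  also have "\<dots> \<le> 15 / \<epsilon>" using exp_le e0 by (simp add: field_simps)
  finally have b: "exp 1 * real k / real d \<le> 15 / \<epsilon>" .
  have "real (Phi d k) \<le> (exp 1 * real k / real d) ^ d" by (rule Phi_bound[OF d1 dk])
  also have "\<dots> \<le> (15 / \<epsilon>) ^ d" using b by (intro power_mono) auto
  finally have "2 * real (Phi d k) \<le> 2 * (15 / \<epsilon>) ^ d" by simp
  also have "\<dots> \<le> 2 ^ d * (15 / \<epsilon>) ^ d"
    using d1 e0 by (intro mult_right_mono) (auto simp: self_le_power)
  also have "\<dots> = (30 / \<epsilon>) ^ d" by (simp add: power_mult_distrib[symmetric])
  finally show ?thesis by (simp add: k_def)
qed

lemma packing:
  fixes \<epsilon> :: real
  assumes finU: "finite U" and Upos: "card U > 0" and FU: "F \<subseteq> Pow U" and v: "vcb F U d"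
    and e0: "0 < \<epsilon>" and e1: "\<epsilon> < 1"
    and sep: "\<And>P P'. P \<in> F \<Longrightarrow> P' \<in> F \<Longrightarrow> P \<noteq> P' \<Longrightarrow> \<epsilon> * card U \<le> card (sdiff P P')"
  shows "real (card F) \<le> (30 / \<epsilon>) ^ d"
proof (cases "d = 0")
  case True
  thus ?thesis using sauer_edges[OF finU FU v] by simp
next
  case False
  hence d1: "1 \<le> d" by simp
  define n where "n = card U"
  define k where "k = nat \<lceil>4 * real d / \<epsilon>\<rceil>"
  define s where "s = min n k"
  define c where "c = real (card F)"
  have npos: "real n > 0" using Upos by (simp add: n_def)
  have core: "(c - real (Phi d s)) * (\<epsilon> * n) * real (Suc s) \<le> 2 * real (n - s) * real d * c"
    using packing_core[OF finU FU v _ sep] e0 unfolding c_def n_def s_def by simp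
  have key: "4 * real d * real (n - s) \<le> \<epsilon> * n * real (Suc s)"
  proof (cases "s = n")
    case True thus ?thesis using e0 by simp
  next
    case False
    hence sk: "s = k" "k \<le> n" by (auto simp: s_def)
    have "real k \<ge> 4 * real d / \<epsilon>" unfolding k_def by linarith
    hence "\<epsilon> * real (Suc s) \<ge> 4 * real d" using e0 sk by (simp add: field_simps)
    hence "\<epsilon> * real (Suc s) * n \<ge> 4 * real d * n" using npos by (simp add: mult_right_mono)
    moreover have "real (n - s) \<le> n" by simp
    hence "4 * real d * real (n - s) \<le> 4 * real d * n" by (simp add: mult_left_mono)
    ultimately show ?thesis by (simp add: algebra_simps)
  qed
  have c0: "c \<ge> 0" by (simp add: c_def)
  have "2 * real (n - s) * real d * c \<le> (\<epsilon> * n * real (Suc s)) * c / 2"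
    using mult_right_mono[OF key c0] by (simp add: algebra_simps)
  with core have A: "(c - real (Phi d s)) * (\<epsilon> * n * real (Suc s)) \<le> (c / 2) * (\<epsilon> * n * real (Suc s))"
    by (simp add: algebra_simps)
  have B: "\<epsilon> * n * real (Suc s) > 0" using e0 npos by simp
  have "c - real (Phi d s) \<le> c / 2" using mult_le_cancel_right_pos[OF B] A by blast
  hence "c \<le> 2 * real (Phi d s)" by simp
  also have "\<dots> \<le> 2 * real (Phi d k)" using Phi_mono[of s k d] by (simp add: s_def)
  also have "\<dots> \<le> (30 / \<epsilon>) ^ d" unfolding k_def by (rule final_num[OF d1 e0 e1])
  finally show ?thesis by (simp add: c_def)
qed

lemma sdiff_commute: "sdiff P Q = sdiff Q P" by (auto simp: sdiff_def)

lemma cover_abstract: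
  fixes f :: "'b \<Rightarrow> 'a set" and \<epsilon> N :: real
  assumes finB: "finite B" and finU: "finite U" and fU: "\<And>b. b \<in> B \<Longrightarrow> f b \<subseteq> U"
    and Upos: "card U > 0" and e0: "0 < \<epsilon>" and e1: "\<epsilon> < 1" and eN: "\<epsilon> * card U \<le> N"
    and v: "vcb (f ` B) U d"
  shows "\<exists>F\<subseteq>B. real (card F) \<le> (30 / \<epsilon>) ^ d \<and> (\<forall>b\<in>B. \<exists>x\<in>F. real (card (sdiff (f b) (f x))) \<le> N)"
proof -
  have N0: "N > 0" using e0 Upos eN by (smt (verit) of_nat_0_less_iff mult_pos_pos)
  define sepd where "sepd F \<longleftrightarrow> (\<forall>x\<in>F. \<forall>y\<in>F. x \<noteq> y \<longrightarrow> N < card (sdiff (f x) (f y)))" for F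
  define Fam where "Fam = {F. F \<subseteq> B \<and> sepd F}"
  have "finite Fam" using finB by (auto simp: Fam_def intro: finite_subset[of _ "Pow B"])
  moreover have "{} \<in> Fam" by (simp add: Fam_def sepd_def)
  ultimately obtain F where F: "F \<in> Fam" and Fmax: "\<And>F'. F' \<in> Fam \<Longrightarrow> F \<subseteq> F' \<Longrightarrow> F = F'"
    using finite_has_maximal[of Fam] by blast
  have FB: "F \<subseteq> B" and sF: "sepd F" using F by (auto simp: Fam_def)
  have cov: "\<exists>x\<in>F. real (card (sdiff (f b) (f x))) \<le> N" if b: "b \<in> B" for b
  proof (cases "b \<in> F")
    case True thus ?thesis using N0 by (intro bexI[of _ b]) (auto simp: sdiff_def)
  next
    case False
    have "insert b F \<notin> Fam" using Fmax[of "insert b F"] False by auto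
    hence "\<not> sepd (insert b F)" using FB b by (auto simp: Fam_def)
    then obtain x y where xy: "x \<in> insert b F" "y \<in> insert b F" "x \<noteq> y" "card (sdiff (f x) (f y)) \<le> N"
      unfolding sepd_def by force
    show ?thesis
    proof (cases "x = b")
      case True thus ?thesis using xy by auto
    next
      case False
      hence "y = b" using xy sF unfolding sepd_def by force
      hence xF: "x \<in> F" "card (sdiff (f x) (f b)) \<le> N" using xy False by auto
      show ?thesis using xF sdiff_commute[of "f b" "f x"] by (intro bexI[of _ x]) simp_all
    qed
  qed
  have inj: "inj_on f F"
  proof (rule inj_onI, rule ccontr)
    fix x y assume "x \<in> F" "y \<in> F" "f x = f y" "x \<noteq> y"
    hence "N < card (sdiff (f x) (f y))" using sF by (auto simp: sepd_def)
    thus False using \<open>f x = f y\<close> N0 by (simp add: sdiff_def)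
  qed
  have "real (card (f ` F)) \<le> (30 / \<epsilon>) ^ d"
  proof (rule packing[OF finU Upos _ _ e0 e1])
    show "f ` F \<subseteq> Pow U" using fU FB by auto
    show "vcb (f ` F) U d" using vcb_sub[OF v] FB by (simp add: image_mono)
    fix P P' assume "P \<in> f ` F" "P' \<in> f ` F" "P \<noteq> P'"
    then obtain x y where "x \<in> F" "y \<in> F" "P = f x" "P' = f y" "x \<noteq> y" by auto
    moreover have "N < card (sdiff (f x) (f y))" using sF \<open>x \<in> F\<close> \<open>y \<in> F\<close> \<open>x \<noteq> y\<close> by (auto simp: sepd_def)
    ultimately show "\<epsilon> * card U \<le> card (sdiff P P')" using eN by simp
  qed
  hence "real (card F) \<le> (30 / \<epsilon>) ^ d" using card_image[OF inj] by simp
  thus ?thesis using FB cov by blast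
qed

lemma VC_ge:
  assumes finS: "finite SS" and Y: "Y \<subseteq> U0" "finite Y" "shatters SS Y"
  shows "card Y \<le> VC U0 SS"
proof -
  define K where "K = card ` {Y. Y \<subseteq> U0 \<and> finite Y \<and> shatters SS Y}"
  have "K \<subseteq> {..card SS}"
  proof
    fix m assume "m \<in> K"
    then obtain Z where Z: "m = card Z" "finite Z" "shatters SS Z" by (auto simp: K_def)
    have "card (Pow Z) \<le> card SS"
      using Z(3) finS unfolding shatters_def by (metis card_image_le)
    hence "2 ^ card Z \<le> card SS" using Z(2) by (simp add: card_Pow)
    hence "card Z \<le> card SS" using less_exp[of "card Z"] by linarith
    thus "m \<in> {..card SS}" using Z(1) by simp
  qed
  hence "finite K" using finite_subset by blast
  moreover have "card Y \<in> K" using Y by (auto simp: K_def)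
  ultimately show ?thesis unfolding VC_def K_def[symmetric] by simp
qed



lemma lcoset_img: "x <#\<^bsub>G\<^esub> A = (\<lambda>a. x \<otimes>\<^bsub>G\<^esub> a) ` A" by (auto simp: l_coset_def)
lemma rcoset_img: "A #>\<^bsub>G\<^esub> x = (\<lambda>a. a \<otimes>\<^bsub>G\<^esub> x) ` A" by (auto simp: r_coset_def)
lemma setinv_img: "set_inv\<^bsub>G\<^esub> B = (\<lambda>b. inv\<^bsub>G\<^esub> b) ` B" by (auto simp: SET_INV_def)
lemma setmult_mem: "h \<in> H \<Longrightarrow> k \<in> K \<Longrightarrow> h \<otimes>\<^bsub>G\<^esub> k \<in> H <#>\<^bsub>G\<^esub> K" by (auto simp: set_mult_def)
lemma setmult_img: "H <#>\<^bsub>G\<^esub> K = (\<lambda>(h,k). h \<otimes>\<^bsub>G\<^esub> k) ` (H \<times> K)" by (auto simp: set_mult_def)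

lemma card_sdiff_img:
  assumes inj: "inj_on h (P \<union> Q)"
  shows "card (h ` P - h ` Q \<union> (h ` Q - h ` P)) = card (sdiff P Q)"
proof -
  have "h ` P - h ` Q = h ` (P - Q)" using inj by (intro inj_on_image_set_diff[symmetric]) auto
  moreover have "h ` Q - h ` P = h ` (Q - P)" using inj by (intro inj_on_image_set_diff[symmetric]) auto
  ultimately have "h ` P - h ` Q \<union> (h ` Q - h ` P) = h ` (sdiff P Q)" by (simp add: sdiff_def image_Un)
  moreover have "inj_on h (sdiff P Q)" using inj by (rule inj_on_subset) (auto simp: sdiff_def)
  ultimately show ?thesis by (simp add: card_image)
qed

lemma part_a:
  fixes G :: "('a, 'b) monoid_scheme" and A B :: "'a set" and N \<epsilon> :: real
  assumes grp: "group G" and AG: "A \<subseteq> carrier G" and BG: "B \<subseteq> carrier G"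
    and finA: "finite A" and finB: "finite B" and Ane: "A \<noteq> {}" and Bne: "B \<noteq> {}"
    and e0: "0 < \<epsilon>" and e1: "\<epsilon> < 1"
    and eps: "\<epsilon> \<le> N / real (card (B <#>\<^bsub>G\<^esub> A))"
  shows "cov_le G B (Stab_left G N A \<inter> (set_inv\<^bsub>G\<^esub> B <#>\<^bsub>G\<^esub> B)) ((30 / \<epsilon>) ^ VC_left G B A)"
proof -
  interpret group G by (rule grp)
  define U where "U = B <#>\<^bsub>G\<^esub> A"
  define f where "f x = x <#\<^bsub>G\<^esub> A" for x
  have finU: "finite U" unfolding U_def setmult_img using finA finB by simp
  have UG: "U \<subseteq> carrier G" unfolding U_def setmult_img using AG BG by auto
  have fU: "f b \<subseteq> U" if "b \<in> B" for b
    unfolding f_def U_def lcoset_img using that by (auto intro: setmult_mem)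
  obtain b0 a0 where "b0 \<in> B" "a0 \<in> A" using Ane Bne by blast
  hence "b0 \<otimes>\<^bsub>G\<^esub> a0 \<in> U" unfolding U_def by (rule setmult_mem)
  hence Upos: "card U > 0" using finU card_gt_0_iff by blast
  have eN: "\<epsilon> * card U \<le> N" using eps Upos by (simp add: le_divide_eq U_def)
  have v: "vcb (f ` B) U (VC_left G B A)"
    unfolding vcb_def
  proof safe
    fix Y assume Y: "Y \<subseteq> U" "shatters (f ` B) Y"
    have "finite Y" using Y(1) finU finite_subset by blast
    moreover have "f ` B = (\<lambda>x. l_coset G x A) ` B" by (simp add: f_def)
    ultimately show "card Y \<le> VC_left G B A"
      unfolding VC_left_def using VC_ge[of "f ` B" Y "carrier G"] Y UG finB by auto
  qed
  obtain F where FB: "F \<subseteq> B" and Fc: "real (card F) \<le> (30 / \<epsilon>) ^ VC_left G B A"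
    and Fcov: "\<forall>b\<in>B. \<exists>x\<in>F. real (card (sdiff (f b) (f x))) \<le> N"
    using cover_abstract[OF finB finU fU Upos e0 e1 eN v] by blast
  have "B \<subseteq> F <#>\<^bsub>G\<^esub> (Stab_left G N A \<inter> (set_inv\<^bsub>G\<^esub> B <#>\<^bsub>G\<^esub> B))"
  proof
    fix b assume b: "b \<in> B"
    then obtain x where x: "x \<in> F" "real (card (sdiff (f b) (f x))) \<le> N" using Fcov by blast
    have xG: "x \<in> carrier G" and bG: "b \<in> carrier G" using x FB BG b by auto
    define y where "y = inv\<^bsub>G\<^esub> x \<otimes>\<^bsub>G\<^esub> b"
    have yG: "y \<in> carrier G" using xG bG by (simp add: y_def)
    have bxy: "b = x \<otimes>\<^bsub>G\<^esub> y" using xG bG by (simp add: y_def m_assoc[symmetric])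
    have "inv\<^bsub>G\<^esub> x \<in> set_inv\<^bsub>G\<^esub> B" using x FB by (auto simp: setinv_img)
    hence y2: "y \<in> set_inv\<^bsub>G\<^esub> B <#>\<^bsub>G\<^esub> B" unfolding y_def using b by (rule setmult_mem)
    define h where "h z = inv\<^bsub>G\<^esub> x \<otimes>\<^bsub>G\<^esub> z" for z
    have h1: "y <#\<^bsub>G\<^esub> A = h ` (f b)"
      unfolding f_def lcoset_img image_image h_def y_def
      using xG bG AG by (intro image_cong) (auto simp: m_assoc)
    have h2: "A = h ` (f x)"
    proof -
      have "h ` (f x) = (\<lambda>a. a) ` A"
        unfolding f_def lcoset_img image_image h_def
        using xG AG by (intro image_cong) (auto simp: m_assoc[symmetric])
      thus ?thesis by simp
    qed
    have injh: "inj_on h (f b \<union> f x)"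
    proof (rule inj_on_subset)
      show "inj_on h (carrier G)" unfolding h_def using xG by (auto simp: inj_on_def)
      show "f b \<union> f x \<subseteq> carrier G" unfolding f_def lcoset_img using xG bG AG by auto
    qed
    have "real (card ((y <#\<^bsub>G\<^esub> A) - A \<union> (A - (y <#\<^bsub>G\<^esub> A)))) = real (card (sdiff (f b) (f x)))"
      unfolding h1 using card_sdiff_img[OF injh] h2 by simp
    hence "y \<in> Stab_left G N A" using x(2) yG by (simp add: Stab_left_def)
    thus "b \<in> F <#>\<^bsub>G\<^esub> (Stab_left G N A \<inter> (set_inv\<^bsub>G\<^esub> B <#>\<^bsub>G\<^esub> B))"
      unfolding bxy using x(1) y2 by (intro setmult_mem) auto
  qed
  moreover have "finite F" using FB finB finite_subset by blast
  ultimately show ?thesis unfolding cov_le_def using FB Fc by blast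
qed

lemma part_b:
  fixes G :: "('a, 'b) monoid_scheme" and A B :: "'a set" and N \<epsilon> :: real
  assumes grp: "group G" and AG: "A \<subseteq> carrier G" and BG: "B \<subseteq> carrier G"
    and finA: "finite A" and finB: "finite B" and Ane: "A \<noteq> {}" and Bne: "B \<noteq> {}"
    and e0: "0 < \<epsilon>" and e1: "\<epsilon> < 1"
    and eps: "\<epsilon> \<le> N / real (card (A <#>\<^bsub>G\<^esub> B))"
  shows "cov_le G (set_inv\<^bsub>G\<^esub> B) (Stab_right G N A \<inter> (B <#>\<^bsub>G\<^esub> set_inv\<^bsub>G\<^esub> B)) ((30 / \<epsilon>) ^ VC_right G B A)"
proof -
  interpret group G by (rule grp)
  define U where "U = A <#>\<^bsub>G\<^esub> B"
  define f where "f x = A #>\<^bsub>G\<^esub> x" for x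
  have finU: "finite U" unfolding U_def setmult_img using finA finB by simp
  have UG: "U \<subseteq> carrier G" unfolding U_def setmult_img using AG BG by auto
  have fU: "f b \<subseteq> U" if "b \<in> B" for b
    unfolding f_def U_def rcoset_img using that by (auto intro: setmult_mem)
  obtain b0 a0 where "b0 \<in> B" "a0 \<in> A" using Ane Bne by blast
  hence "a0 \<otimes>\<^bsub>G\<^esub> b0 \<in> U" unfolding U_def by (intro setmult_mem)
  hence Upos: "card U > 0" using finU card_gt_0_iff by blast
  have eN: "\<epsilon> * card U \<le> N" using eps Upos by (simp add: le_divide_eq U_def)
  have v: "vcb (f ` B) U (VC_right G B A)"
    unfolding vcb_def
  proof safe
    fix Y assume Y: "Y \<subseteq> U" "shatters (f ` B) Y"
    have "finite Y" using Y(1) finU finite_subset by blast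
    moreover have "f ` B = (\<lambda>x. r_coset G A x) ` B" by (simp add: f_def)
    ultimately show "card Y \<le> VC_right G B A"
      unfolding VC_right_def using VC_ge[of "f ` B" Y "carrier G"] Y UG finB by auto
  qed
  obtain F where FB: "F \<subseteq> B" and Fc: "real (card F) \<le> (30 / \<epsilon>) ^ VC_right G B A"
    and Fcov: "\<forall>b\<in>B. \<exists>x\<in>F. real (card (sdiff (f b) (f x))) \<le> N"
    using cover_abstract[OF finB finU fU Upos e0 e1 eN v] by blast
  define F' where "F' = set_inv\<^bsub>G\<^esub> F"
  have "set_inv\<^bsub>G\<^esub> B \<subseteq> F' <#>\<^bsub>G\<^esub> (Stab_right G N A \<inter> (B <#>\<^bsub>G\<^esub> set_inv\<^bsub>G\<^esub> B))"
  proof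
    fix ib assume "ib \<in> set_inv\<^bsub>G\<^esub> B"
    then obtain b where b: "b \<in> B" "ib = inv\<^bsub>G\<^esub> b" by (auto simp: setinv_img)
    then obtain x where x: "x \<in> F" "real (card (sdiff (f b) (f x))) \<le> N" using Fcov by blast
    have xG: "x \<in> carrier G" and bG: "b \<in> carrier G" using x FB BG b by auto
    define y where "y = x \<otimes>\<^bsub>G\<^esub> inv\<^bsub>G\<^esub> b"
    have yG: "y \<in> carrier G" using xG bG by (simp add: y_def)
    have iby: "ib = inv\<^bsub>G\<^esub> x \<otimes>\<^bsub>G\<^esub> y" using xG bG b(2) by (simp add: y_def m_assoc[symmetric])
    have ix: "inv\<^bsub>G\<^esub> x \<in> F'" using x by (auto simp: F'_def setinv_img)
    have "inv\<^bsub>G\<^esub> b \<in> set_inv\<^bsub>G\<^esub> B" using b by (auto simp: setinv_img)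
    hence y2: "y \<in> B <#>\<^bsub>G\<^esub> set_inv\<^bsub>G\<^esub> B" unfolding y_def using x(1) FB by (intro setmult_mem) auto
    define h where "h z = z \<otimes>\<^bsub>G\<^esub> inv\<^bsub>G\<^esub> b" for z
    have h1: "A #>\<^bsub>G\<^esub> y = h ` (f x)"
      unfolding f_def rcoset_img image_image h_def y_def
      using xG bG AG by (intro image_cong) (auto simp: m_assoc)
    have h2: "A = h ` (f b)"
    proof -
      have "h ` (f b) = (\<lambda>a. a) ` A"
        unfolding f_def rcoset_img image_image h_def
        using bG AG by (intro image_cong) (auto simp: m_assoc)
      thus ?thesis by simp
    qed
    have injh: "inj_on h (f x \<union> f b)"
    proof (rule inj_on_subset)
      show "inj_on h (carrier G)" unfolding h_def using bG by (auto simp: inj_on_def)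
      show "f x \<union> f b \<subseteq> carrier G" unfolding f_def rcoset_img using xG bG AG by auto
    qed
    have "real (card ((A #>\<^bsub>G\<^esub> y) - A \<union> (A - (A #>\<^bsub>G\<^esub> y)))) = real (card (sdiff (f x) (f b)))"
      unfolding h1 using card_sdiff_img[OF injh] h2 by simp
    also have "\<dots> = real (card (sdiff (f b) (f x)))" by (simp add: sdiff_commute)
    finally have "y \<in> Stab_right G N A" using x(2) yG by (simp add: Stab_right_def)
    thus "ib \<in> F' <#>\<^bsub>G\<^esub> (Stab_right G N A \<inter> (B <#>\<^bsub>G\<^esub> set_inv\<^bsub>G\<^esub> B))"
      unfolding iby using ix y2 by (intro setmult_mem) auto
  qed
  moreover have "finite F'" using FB finB finite_subset by (auto simp: F'_def setinv_img)
  moreover have "F' \<subseteq> set_inv\<^bsub>G\<^esub> B" using FB by (auto simp: F'_def setinv_img)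
  moreover have "real (card F') \<le> (30 / \<epsilon>) ^ VC_right G B A"
  proof -
    have "card F' \<le> card F" unfolding F'_def setinv_img by (rule card_image_le) (use FB finB finite_subset in blast)
    thus ?thesis using Fc by linarith
  qed
  ultimately show ?thesis unfolding cov_le_def by blast
qed

theorem proposition2p10:
  fixes G :: "('a, 'b) monoid_scheme" and A B :: "'a set" and N \<epsilon> :: real
  assumes "group G"
    and "A \<subseteq> carrier G" and "B \<subseteq> carrier G"
    and "finite A" and "finite B" and "A \<noteq> {}" and "B \<noteq> {}"
    and "N > 0" and "0 < \<epsilon>" and "\<epsilon> < 1"
  shows "(\<epsilon> \<le> N / real (card (B <#>\<^bsub>G\<^esub> A)) \<longrightarrow>
           cov_le G B (Stab_left G N A \<inter> (set_inv\<^bsub>G\<^esub> B <#>\<^bsub>G\<^esub> B))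
             ((30 / \<epsilon>) ^ VC_left G B A))
       \<and> (\<epsilon> \<le> N / real (card (A <#>\<^bsub>G\<^esub> B)) \<longrightarrow>
           cov_le G (set_inv\<^bsub>G\<^esub> B) (Stab_right G N A \<inter> (B <#>\<^bsub>G\<^esub> set_inv\<^bsub>G\<^esub> B))
             ((30 / \<epsilon>) ^ VC_right G B A))"
  using part_a[OF assms(1-7) assms(9,10)] part_b[OF assms(1-7) assms(9,10)] by blast


end
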